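(* Let $S$ be an intra-regular $\Gamma$-AG$^{**}$-groupoid and $A\subseteq S$. Then $A$ is a left $\Gamma$-ideal of $S$ if and only if $A$ is a right $\Gamma$-ideal of $S$.
   Context: Let $S$ and $\Gamma$ be nonempty sets with a map $S\times\Gamma\times S\to S$, $(x,\gamma,y)\mapsto x\gamma y$. $S$ is a $\Gamma$-AG-groupoid if $(x\gamma y)\delta z=(z\gamma y)\delta x$ for all $x,y,z\in S$, $\gamma,\delta\in\Gamma$; it is a $\Gamma$-AG$^{**}$-groupoid if moreover $a\alpha(b\beta c)=b\alpha(a\beta c)$ for all $a,b,c\in S$, $\alpha,\beta\in\Gamma$. For subsets $A,B\subseteq S$, $A\Gamma B=\{a\gamma b: a\in A,\gamma\in\Gamma,b\in B\}$. $S$ is intra-regular if for every $a\in S$ there exist $x,y\in S$ and $\beta,\gamma,\delta\in\Gamma$ with $a=(x\beta(a\delta a))\gamma y$. A nonempty subset $A$ is a left (right) $\Gamma$-ideal if $S\Gamma A\subseteq A$ ($A\Gamma S\subseteq A$). *)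

theory Defs
  imports Main
begin

text \<open>A Gamma-groupoid: carrier S, parameter set G (Gamma), ternary operation m,
  written m x g y for x g y, closed on S.\<close>

definition gamma_closed :: "'a set \<Rightarrow> 'g set \<Rightarrow> ('a \<Rightarrow> 'g \<Rightarrow> 'a \<Rightarrow> 'a) \<Rightarrow> bool" where
  "gamma_closed S G m \<longleftrightarrow> S \<noteq> {} \<and> G \<noteq> {} \<and>
     (\<forall>x\<in>S. \<forall>g\<in>G. \<forall>y\<in>S. m x g y \<in> S)"

definition gamma_AG_groupoid :: "'a set \<Rightarrow> 'g set \<Rightarrow> ('a \<Rightarrow> 'g \<Rightarrow> 'a \<Rightarrow> 'a) \<Rightarrow> bool" where
  "gamma_AG_groupoid S G m \<longleftrightarrow> gamma_closed S G m \<and>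
     (\<forall>x\<in>S. \<forall>y\<in>S. \<forall>z\<in>S. \<forall>g\<in>G. \<forall>d\<in>G. m (m x g y) d z = m (m z g y) d x)"

definition gamma_AG2_groupoid :: "'a set \<Rightarrow> 'g set \<Rightarrow> ('a \<Rightarrow> 'g \<Rightarrow> 'a \<Rightarrow> 'a) \<Rightarrow> bool" where
  "gamma_AG2_groupoid S G m \<longleftrightarrow> gamma_AG_groupoid S G m \<and>
     (\<forall>a\<in>S. \<forall>b\<in>S. \<forall>c\<in>S. \<forall>al\<in>G. \<forall>be\<in>G. m a al (m b be c) = m b al (m a be c))"

definition gamma_prod :: "('a \<Rightarrow> 'g \<Rightarrow> 'a \<Rightarrow> 'a) \<Rightarrow> 'a set \<Rightarrow> 'g set \<Rightarrow> 'a set \<Rightarrow> 'a set" where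
  "gamma_prod m A G B = {m a g b | a g b. a \<in> A \<and> g \<in> G \<and> b \<in> B}"

definition intra_regular :: "'a set \<Rightarrow> 'g set \<Rightarrow> ('a \<Rightarrow> 'g \<Rightarrow> 'a \<Rightarrow> 'a) \<Rightarrow> bool" where
  "intra_regular S G m \<longleftrightarrow> (\<forall>a\<in>S. \<exists>x\<in>S. \<exists>y\<in>S. \<exists>be\<in>G. \<exists>ga\<in>G. \<exists>de\<in>G.
      a = m (m x be (m a de a)) ga y)"

definition left_gamma_ideal :: "'a set \<Rightarrow> 'g set \<Rightarrow> ('a \<Rightarrow> 'g \<Rightarrow> 'a \<Rightarrow> 'a) \<Rightarrow> 'a set \<Rightarrow> bool" where
  "left_gamma_ideal S G m A \<longleftrightarrow> A \<noteq> {} \<and> A \<subseteq> S \<and> gamma_prod m S G A \<subseteq> A"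

definition right_gamma_ideal :: "'a set \<Rightarrow> 'g set \<Rightarrow> ('a \<Rightarrow> 'g \<Rightarrow> 'a \<Rightarrow> 'a) \<Rightarrow> 'a set \<Rightarrow> bool" where
  "right_gamma_ideal S G m A \<longleftrightarrow> A \<noteq> {} \<and> A \<subseteq> S \<and> gamma_prod m A G S \<subseteq> A"

end

theory Submission
  imports Defs
begin

theorem mainTheorem4:
  fixes S :: "'a set" and G :: "'g set" and m :: "'a \<Rightarrow> 'g \<Rightarrow> 'a \<Rightarrow> 'a"
    and A :: "'a set"
  assumes "gamma_AG2_groupoid S G m"
    and "intra_regular S G m"
    and "A \<subseteq> S"
  shows "left_gamma_ideal S G m A \<longleftrightarrow> right_gamma_ideal S G m A"
proof -
  have cl: "\<And>x g y. x \<in> S \<Longrightarrow> g \<in> G \<Longrightarrow> y \<in> S \<Longrightarrow> m x g y \<in> S"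
    using assms(1) unfolding gamma_AG2_groupoid_def gamma_AG_groupoid_def gamma_closed_def by blast
  have li: "\<And>x y z g d. x \<in> S \<Longrightarrow> y \<in> S \<Longrightarrow> z \<in> S \<Longrightarrow> g \<in> G \<Longrightarrow> d \<in> G \<Longrightarrow>
      m (m x g y) d z = m (m z g y) d x"
    using assms(1) unfolding gamma_AG2_groupoid_def gamma_AG_groupoid_def by blast
  have ag: "\<And>a b c al be. a \<in> S \<Longrightarrow> b \<in> S \<Longrightarrow> c \<in> S \<Longrightarrow> al \<in> G \<Longrightarrow> be \<in> G \<Longrightarrow>
      m a al (m b be c) = m b al (m a be c)"
    using assms(1) unfolding gamma_AG2_groupoid_def by blast
  have ir: "\<And>a. a \<in> S \<Longrightarrow> \<exists>x\<in>S. \<exists>y\<in>S. \<exists>be\<in>G. \<exists>ga\<in>G. \<exists>de\<in>G.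
      a = m (m x be (m a de a)) ga y"
    using assms(2) unfolding intra_regular_def by blast
  show ?thesis
  proof
    assume L: "left_gamma_ideal S G m A"
    hence LA: "\<And>s g a. s \<in> S \<Longrightarrow> g \<in> G \<Longrightarrow> a \<in> A \<Longrightarrow> m s g a \<in> A"
      unfolding left_gamma_ideal_def gamma_prod_def by blast
    have "gamma_prod m A G S \<subseteq> A"
    proof
      fix z assume "z \<in> gamma_prod m A G S"
      then obtain a g s where z: "z = m a g s" "a \<in> A" "g \<in> G" "s \<in> S"
        unfolding gamma_prod_def by blast
      have aS: "a \<in> S" using z assms(3) by blast
      obtain x y be ga de where h: "x\<in>S" "y\<in>S" "be\<in>G" "ga\<in>G" "de\<in>G"
        "a = m (m x be (m a de a)) ga y" using ir[OF aS] by blast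
      have "z = m (m s ga y) g (m x be (m a de a))"
        using z h li[of "m x be (m a de a)" y s ga g] cl aS by metis
      moreover have "m x be (m a de a) \<in> A" using LA h z aS by blast
      ultimately show "z \<in> A" using LA cl h z by blast
    qed
    thus "right_gamma_ideal S G m A" using L unfolding left_gamma_ideal_def right_gamma_ideal_def by blast
  next
    assume R: "right_gamma_ideal S G m A"
    hence RA: "\<And>s g a. a \<in> A \<Longrightarrow> g \<in> G \<Longrightarrow> s \<in> S \<Longrightarrow> m a g s \<in> A"
      unfolding right_gamma_ideal_def gamma_prod_def by blast
    have "gamma_prod m S G A \<subseteq> A"
    proof
      fix z assume "z \<in> gamma_prod m S G A"
      then obtain a g s where z: "z = m s g a" "a \<in> A" "g \<in> G" "s \<in> S"
        unfolding gamma_prod_def by blast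
      have aS: "a \<in> S" using z assms(3) by blast
      obtain x y be ga de where h: "x\<in>S" "y\<in>S" "be\<in>G" "ga\<in>G" "de\<in>G"
        "a = m (m x be (m a de a)) ga y" using ir[OF aS] by blast
      have e1: "z = m (m x be (m a de a)) g (m s ga y)"
        using z h ag[of s "m x be (m a de a)" y g ga] cl aS by metis
      have "m x be (m a de a) = m a be (m x de a)" using ag h aS by blast
      moreover have "m a be (m x de a) \<in> A" using RA cl h z aS by blast
      ultimately show "z \<in> A" using e1 RA cl h z by metis
    qed
    thus "left_gamma_ideal S G m A" using R unfolding left_gamma_ideal_def right_gamma_ideal_def by blast
  qed
qed

end
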